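(* If a discrete Hecke pair $(G,H)$ has property (RD), then it is relatively unimodular, i.e. $L(g)=R(g)$ for all $g\in G$.
   Context: A discrete Hecke pair is a group $G$ with a subgroup $H$ such that $L(x):=[H:H\cap xHx^{-1}]<\infty$ for all $x\in G$; set $R(x):=L(x^{-1})$. The relative modular function is $\Delta_{(G,H)}(g)=L(g)/R(g)$, and $(G,H)$ is relatively unimodular if $\Delta_{(G,H)}\equiv1$. The Hecke algebra $\mathcal H(G,H)$ consists of finitely supported right $H$-invariant functions on $H\backslash G$ with product $f*g(Hx)=\sum_{Hy\in H\backslash G}f(Hxy^{-1})g(Hy)$, and $\lambda(f)\xi=f*\xi$ on $\ell^2(H\backslash G)$. A length function on $(G,H)$ is $l:G\to[0,\infty)$ with $l(e)=0$, $l(g)=l(g^{-1})$, $l(gh)\le l(g)+l(h)$ and $l|_H=0$. $(G,H)$ has property (RD) if there exist such $l$ and $s,c>0$ with $\|\lambda(f)\|\le c\big(\sum_{Hx\in H\backslash G}|f(Hx)|^2(1+l(x))^{2s}\big)^{1/2}$ for all $f\in\mathcal H(G,H)$. *)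

theory Defs
  imports "HOL-Analysis.Analysis" "HOL-Algebra.Coset"
begin

text \<open>Right cosets Hx are written H #> x; the coset space H\G is rcosets H.\<close>

definition coset_rep :: "'a set \<Rightarrow> 'a" where
  "coset_rep C = (SOME x. x \<in> C)"

definition hecke_L_cosets :: "('a, 'b) monoid_scheme \<Rightarrow> 'a set \<Rightarrow> 'a \<Rightarrow> 'a set set" where
  "hecke_L_cosets G H x =
     (\<lambda>h. (H \<inter> ((x <#\<^bsub>G\<^esub> H) #>\<^bsub>G\<^esub> inv\<^bsub>G\<^esub> x)) #>\<^bsub>G\<^esub> h) ` H"

definition hecke_L :: "('a, 'b) monoid_scheme \<Rightarrow> 'a set \<Rightarrow> 'a \<Rightarrow> nat" where
  "hecke_L G H x = card (hecke_L_cosets G H x)"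

definition hecke_R :: "('a, 'b) monoid_scheme \<Rightarrow> 'a set \<Rightarrow> 'a \<Rightarrow> nat" where
  "hecke_R G H x = hecke_L G H (inv\<^bsub>G\<^esub> x)"

definition hecke_pair :: "('a, 'b) monoid_scheme \<Rightarrow> 'a set \<Rightarrow> bool" where
  "hecke_pair G H \<longleftrightarrow> group G \<and> subgroup H G \<and>
     (\<forall>x \<in> carrier G. finite (hecke_L_cosets G H x))"

definition rel_modular :: "('a, 'b) monoid_scheme \<Rightarrow> 'a set \<Rightarrow> 'a \<Rightarrow> real" where
  "rel_modular G H g = real (hecke_L G H g) / real (hecke_R G H g)"

definition rel_unimodular :: "('a, 'b) monoid_scheme \<Rightarrow> 'a set \<Rightarrow> bool" where
  "rel_unimodular G H \<longleftrightarrow> (\<forall>g \<in> carrier G. rel_modular G H g = 1)"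

definition length_function :: "('a, 'b) monoid_scheme \<Rightarrow> 'a set \<Rightarrow> ('a \<Rightarrow> real) \<Rightarrow> bool" where
  "length_function G H l \<longleftrightarrow>
     (\<forall>g \<in> carrier G. l g \<ge> 0) \<and> l \<one>\<^bsub>G\<^esub> = 0 \<and>
     (\<forall>g \<in> carrier G. l g = l (inv\<^bsub>G\<^esub> g)) \<and>
     (\<forall>g \<in> carrier G. \<forall>h \<in> carrier G. l (g \<otimes>\<^bsub>G\<^esub> h) \<le> l g + l h) \<and>
     (\<forall>h \<in> H. l h = 0)"

definition hecke_algebra :: "('a, 'b) monoid_scheme \<Rightarrow> 'a set \<Rightarrow> ('a set \<Rightarrow> complex) set" where
  "hecke_algebra G H = {f. {C. f C \<noteq> 0} \<subseteq> rcosets\<^bsub>G\<^esub> H \<and> finite {C. f C \<noteq> 0} \<and>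
      (\<forall>C \<in> rcosets\<^bsub>G\<^esub> H. \<forall>h \<in> H. f (C #>\<^bsub>G\<^esub> h) = f C)}"

definition hecke_conv :: "('a, 'b) monoid_scheme \<Rightarrow> 'a set \<Rightarrow> ('a set \<Rightarrow> complex) \<Rightarrow> ('a set \<Rightarrow> complex) \<Rightarrow> 'a set \<Rightarrow> complex" where
  "hecke_conv G H f \<xi> C =
     (\<Sum>\<^sub>\<infinity>D \<in> rcosets\<^bsub>G\<^esub> H.
        f (H #>\<^bsub>G\<^esub> (coset_rep C \<otimes>\<^bsub>G\<^esub> inv\<^bsub>G\<^esub> coset_rep D)) * \<xi> D)"

definition in_l2 :: "('a, 'b) monoid_scheme \<Rightarrow> 'a set \<Rightarrow> ('a set \<Rightarrow> complex) \<Rightarrow> bool" where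
  "in_l2 G H \<xi> \<longleftrightarrow> (\<lambda>C. (cmod (\<xi> C))\<^sup>2) summable_on (rcosets\<^bsub>G\<^esub> H)"

definition l2_norm :: "('a, 'b) monoid_scheme \<Rightarrow> 'a set \<Rightarrow> ('a set \<Rightarrow> complex) \<Rightarrow> real" where
  "l2_norm G H \<xi> = sqrt (\<Sum>\<^sub>\<infinity>C \<in> rcosets\<^bsub>G\<^esub> H. (cmod (\<xi> C))\<^sup>2)"

text \<open>Property (RD): ||lambda(f)|| <= c * weighted l2 norm of f, written out via the
  operator norm: ||f * xi|| <= c * (...) * ||xi|| for every xi in l2(H\G).\<close>
definition has_RD :: "('a, 'b) monoid_scheme \<Rightarrow> 'a set \<Rightarrow> bool" where
  "has_RD G H \<longleftrightarrow> (\<exists>l s c. length_function G H l \<and> s > 0 \<and> c > 0 \<and>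
     (\<forall>f \<in> hecke_algebra G H. \<forall>\<xi>. in_l2 G H \<xi> \<longrightarrow>
        in_l2 G H (hecke_conv G H f \<xi>) \<and>
        l2_norm G H (hecke_conv G H f \<xi>) \<le>
          c * sqrt (\<Sum>C \<in> {C. f C \<noteq> 0}.
                (cmod (f C))\<^sup>2 * (1 + l (coset_rep C)) powr (2 * s))
            * l2_norm G H \<xi>))"

end

theory Submission
  imports Defs
begin



lemma bij_images:
  assumes "\<And>a b. a \<in> A \<Longrightarrow> b \<in> A \<Longrightarrow> (f a = f b \<longleftrightarrow> g a = g b)"
  shows "bij_betw (\<lambda>y. g (SOME a. a \<in> A \<and> f a = y)) (f ` A) (g ` A)"
proof -
  have k: "g (SOME a. a \<in> A \<and> f a = f b) = g b" if "b \<in> A" for b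
  proof -
    have "(SOME a. a \<in> A \<and> f a = f b) \<in> A \<and> f (SOME a. a \<in> A \<and> f a = f b) = f b"
      by (rule someI_ex) (use that in blast)
    thus ?thesis using assms that by blast
  qed
  have inj: "inj_on (\<lambda>y. g (SOME a. a \<in> A \<and> f a = y)) (f ` A)"
  proof (rule inj_onI)
    fix u v assume "u \<in> f ` A" "v \<in> f ` A"
      and e: "g (SOME a. a \<in> A \<and> f a = u) = g (SOME a. a \<in> A \<and> f a = v)"
    then obtain a b where ab: "a \<in> A" "b \<in> A" "u = f a" "v = f b" by blast
    have "g a = g b" using e k[OF ab(1)] k[OF ab(2)] ab(3,4) by simp
    thus "u = v" using assms[OF ab(1,2)] ab(3,4) by simp
  qed
  have im: "(\<lambda>y. g (SOME a. a \<in> A \<and> f a = y)) ` (f ` A) = g ` A"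
    unfolding image_image using k by (simp cong: image_cong)
  show ?thesis unfolding bij_betw_def using inj im by blast
qed

lemma card_images:
  assumes "\<And>a b. a \<in> A \<Longrightarrow> b \<in> A \<Longrightarrow> (f a = f b \<longleftrightarrow> g a = g b)"
  shows "card (f ` A) = card (g ` A)" "finite (f ` A) \<longleftrightarrow> finite (g ` A)"
proof -
  have b: "bij_betw (\<lambda>y. g (SOME a. a \<in> A \<and> f a = y)) (f ` A) (g ` A)"
    by (rule bij_images) (rule assms)
  show "card (f ` A) = card (g ` A)" by (rule bij_betw_same_card[OF b])
  show "finite (f ` A) \<longleftrightarrow> finite (g ` A)" by (rule bij_betw_finite[OF b])
qed

context group begin

lemma inv_cancel1 [simp]: "x \<in> carrier G \<Longrightarrow> y \<in> carrier G \<Longrightarrow> inv x \<otimes> (x \<otimes> y) = y"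
  by (simp add: m_assoc[symmetric])
lemma inv_cancel2 [simp]: "x \<in> carrier G \<Longrightarrow> y \<in> carrier G \<Longrightarrow> x \<otimes> (inv x \<otimes> y) = y"
  by (simp add: m_assoc[symmetric])

lemma rcos_eq:
  assumes "subgroup K G" "a \<in> carrier G" "b \<in> carrier G"
  shows "K #> a = K #> b \<longleftrightarrow> a \<otimes> inv b \<in> K"
proof
  assume "K #> a = K #> b"
  then have "a \<in> K #> b" using rcos_self assms by metis
  thus "a \<otimes> inv b \<in> K" using subgroup.rcos_module_imp[OF assms(1) is_group assms(3)] by blast
next
  assume "a \<otimes> inv b \<in> K"
  then have "a \<in> K #> b" using subgroup.rcos_module_rev[OF assms(1) is_group assms(3,2)] by blast
  thus "K #> a = K #> b" using repr_independence assms by metis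
qed

definition cj :: "'a \<Rightarrow> 'a set \<Rightarrow> 'a set" where
  "cj x M = {y \<in> carrier G. inv x \<otimes> y \<otimes> x \<in> M}"

lemma cj_eq:
  assumes "x \<in> carrier G" "M \<subseteq> carrier G"
  shows "(x <# M) #> inv x = cj x M"
proof
  show "(x <# M) #> inv x \<subseteq> cj x M"
  proof
    fix y assume "y \<in> (x <# M) #> inv x"
    then obtain m where m: "m \<in> M" "y = x \<otimes> m \<otimes> inv x"
      unfolding l_coset_def r_coset_def by blast
    have mc: "m \<in> carrier G" using m assms by blast
    have "inv x \<otimes> y \<otimes> x = m" using m(2) mc assms by (simp add: m_assoc)
    moreover have "y \<in> carrier G" using m(2) mc assms by simp
    ultimately show "y \<in> cj x M" using m(1) unfolding cj_def by simp
  qed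
  show "cj x M \<subseteq> (x <# M) #> inv x"
  proof
    fix y assume "y \<in> cj x M"
    then have y: "y \<in> carrier G" "inv x \<otimes> y \<otimes> x \<in> M" by (auto simp: cj_def)
    have e: "y = x \<otimes> (inv x \<otimes> y \<otimes> x) \<otimes> inv x" using y assms by (simp add: m_assoc)
    have "x \<otimes> (inv x \<otimes> y \<otimes> x) \<in> x <# M" unfolding l_coset_def using y(2) by blast
    hence "x \<otimes> (inv x \<otimes> y \<otimes> x) \<otimes> inv x \<in> (x <# M) #> inv x" unfolding r_coset_def by blast
    thus "y \<in> (x <# M) #> inv x" by (simp only: e[symmetric])
  qed
qed

lemma cj_sub: "cj x M \<subseteq> carrier G" by (auto simp: cj_def)

lemma cj_Int: "cj x (M \<inter> N) = cj x M \<inter> cj x N" by (auto simp: cj_def)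

lemma cj_cj:
  assumes "x \<in> carrier G" "y \<in> carrier G"
  shows "cj x (cj y M) = cj (x \<otimes> y) M"
  using assms by (auto simp: cj_def m_assoc inv_mult_group)

lemma cj_one: "M \<subseteq> carrier G \<Longrightarrow> cj \<one> M = M"
  by (auto simp: cj_def)

lemma mem_cj:
  assumes "x \<in> carrier G" "a \<in> carrier G"
  shows "x \<otimes> a \<otimes> inv x \<in> cj x M \<longleftrightarrow> a \<in> M"
  using assms by (simp add: cj_def m_assoc[symmetric]) (simp add: m_assoc)

lemma cj_subgroup:
  assumes "subgroup M G" "x \<in> carrier G"
  shows "subgroup (cj x M) G"
proof (rule subgroupI)
  show "cj x M \<subseteq> carrier G" by (rule cj_sub)
  have "\<one> \<in> cj x M" using assms subgroup.one_closed[OF assms(1)] by (simp add: cj_def)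
  thus "cj x M \<noteq> {}" by blast
  fix a assume "a \<in> cj x M"
  then have a: "a \<in> carrier G" "inv x \<otimes> a \<otimes> x \<in> M" by (auto simp: cj_def)
  have "inv x \<otimes> inv a \<otimes> x = inv (inv x \<otimes> a \<otimes> x)"
    using a assms by (simp add: inv_mult_group m_assoc)
  also have "\<dots> \<in> M" using a subgroup.m_inv_closed[OF assms(1)] by blast
  finally have "inv x \<otimes> inv a \<otimes> x \<in> M" .
  thus "inv a \<in> cj x M" using inv_closed[OF a(1)] unfolding cj_def by blast
next
  fix a b assume "a \<in> cj x M" "b \<in> cj x M"
  then have a: "a \<in> carrier G" "inv x \<otimes> a \<otimes> x \<in> M" "b \<in> carrier G" "inv x \<otimes> b \<otimes> x \<in> M" by (auto simp: cj_def)
  have "inv x \<otimes> (a \<otimes> b) \<otimes> x = (inv x \<otimes> a \<otimes> x) \<otimes> (inv x \<otimes> b \<otimes> x)"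
    using a assms by (simp add: m_assoc)
  also have "\<dots> \<in> M" using a subgroup.m_closed[OF assms(1)] by blast
  finally have "inv x \<otimes> (a \<otimes> b) \<otimes> x \<in> M" .
  thus "a \<otimes> b \<in> cj x M" using m_closed[OF a(1) a(3)] unfolding cj_def by blast
qed

end



context group begin

definition cosets_in :: "'a set \<Rightarrow> 'a set \<Rightarrow> 'a set set" where
  "cosets_in A B = (\<lambda>a. B #> a) ` A"

lemma sub_mult_absorb:
  assumes "subgroup D G" "subgroup B G" "D \<subseteq> B"
  shows "B <#> D = B"
proof
  show "B <#> D \<subseteq> B" unfolding set_mult_def using assms subgroup.m_closed[OF assms(2)] by blast
  show "B \<subseteq> B <#> D"
  proof
    fix b assume b: "b \<in> B"
    have "b = b \<otimes> \<one>" using b subgroup.mem_carrier[OF assms(2)] by simp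
    moreover have "\<one> \<in> D" using subgroup.one_closed[OF assms(1)] .
    ultimately show "b \<in> B <#> D" using b unfolding set_mult_def by blast
  qed
qed

lemma idx_trans:
  assumes D: "subgroup D G" and B: "subgroup B G" and A: "subgroup A G"
    and DB: "D \<subseteq> B" and BA: "B \<subseteq> A"
    and fAB: "finite (cosets_in A B)" and fBD: "finite (cosets_in B D)"
  shows "finite (cosets_in A D) \<and> card (cosets_in A D) = card (cosets_in A B) * card (cosets_in B D)"
proof -
  have Ac: "A \<subseteq> carrier G" using subgroup.subset[OF A] .
  have Bc: "B \<subseteq> carrier G" using subgroup.subset[OF B] .
  have Dc: "D \<subseteq> carrier G" using subgroup.subset[OF D] .
  define P where "P = cosets_in A D"
  define Q where "Q = cosets_in A B"
  define F where "F = (\<lambda>p. B <#> p)"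
  have Feq: "F (D #> a) = B #> a" if "a \<in> A" for a
    unfolding F_def using setmult_rcos_assoc[OF Bc Dc] that Ac sub_mult_absorb[OF D B DB] by auto
  have FP: "F ` P = Q" unfolding P_def Q_def cosets_in_def image_image using Feq
    by (simp cong: image_cong)
  have fib: "{p \<in> P. F p = B #> a0} = (\<lambda>b. D #> (b \<otimes> a0)) ` B" if a0: "a0 \<in> A" for a0
  proof
    show "{p \<in> P. F p = B #> a0} \<subseteq> (\<lambda>b. D #> (b \<otimes> a0)) ` B"
    proof
      fix p assume "p \<in> {p \<in> P. F p = B #> a0}"
      then obtain a where a: "a \<in> A" "p = D #> a" "B #> a = B #> a0"
        unfolding P_def cosets_in_def using Feq by auto
      have ac: "a \<in> carrier G" "a0 \<in> carrier G" using a a0 Ac by auto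
      have "a \<otimes> inv a0 \<in> B" using rcos_eq[OF B ac] a(3) by simp
      moreover have e: "(a \<otimes> inv a0) \<otimes> a0 = a" using ac by (simp add: m_assoc)
      moreover have "p = D #> ((a \<otimes> inv a0) \<otimes> a0)" by (simp only: e a(2))
      ultimately show "p \<in> (\<lambda>b. D #> (b \<otimes> a0)) ` B" by (rule_tac image_eqI) auto
    qed
    show "(\<lambda>b. D #> (b \<otimes> a0)) ` B \<subseteq> {p \<in> P. F p = B #> a0}"
    proof
      fix p assume "p \<in> (\<lambda>b. D #> (b \<otimes> a0)) ` B"
      then obtain b where b: "b \<in> B" "p = D #> (b \<otimes> a0)" by blast
      have ba: "b \<otimes> a0 \<in> A" using b BA a0 subgroup.m_closed[OF A] by blast
      have bc: "b \<in> carrier G" "a0 \<in> carrier G" using b a0 Ac Bc by auto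
      have "B #> (b \<otimes> a0) = B #> a0"
        using rcos_eq[OF B m_closed[OF bc] bc(2)] b bc by (simp add: m_assoc)
      thus "p \<in> {p \<in> P. F p = B #> a0}" using b ba Feq unfolding P_def cosets_in_def by auto
    qed
  qed
  have fibcard: "card ((\<lambda>b. D #> (b \<otimes> a0)) ` B) = card (cosets_in B D) \<and>
                 finite ((\<lambda>b. D #> (b \<otimes> a0)) ` B)" if a0: "a0 \<in> A" for a0
  proof -
    have "D #> (b \<otimes> a0) = D #> (b' \<otimes> a0) \<longleftrightarrow> D #> b = D #> b'" if "b \<in> B" "b' \<in> B" for b b'
    proof -
      have c: "b \<in> carrier G" "b' \<in> carrier G" "a0 \<in> carrier G" using that a0 Ac Bc by auto
      have "(b \<otimes> a0) \<otimes> inv (b' \<otimes> a0) = b \<otimes> inv b'" using c by (simp add: inv_mult_group m_assoc)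
      thus ?thesis using rcos_eq[OF D m_closed[OF c(1,3)] m_closed[OF c(2,3)]] rcos_eq[OF D c(1,2)] by simp
    qed
    then show ?thesis using card_images[of B "\<lambda>b. D #> (b \<otimes> a0)" "\<lambda>b. D #> b"] fBD
      unfolding cosets_in_def by auto
  qed
  have fibQ: "finite {p \<in> P. F p = q} \<and> card {p \<in> P. F p = q} = card (cosets_in B D)" if "q \<in> Q" for q
  proof -
    obtain a0 where "a0 \<in> A" "q = B #> a0" using \<open>q \<in> Q\<close> unfolding Q_def cosets_in_def by blast
    thus ?thesis using fib fibcard by simp
  qed
  have Pun: "P = (\<Union>q\<in>Q. {p \<in> P. F p = q})" using FP by blast
  have fP: "finite P" using Pun fibQ fAB unfolding Q_def by (metis (no_types, lifting) finite_UN)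
  have "card P = (\<Sum>q\<in>Q. card {p \<in> P. F p = q})"
    by (subst Pun, rule card_UN_disjoint) (use fAB fibQ in \<open>auto simp: Q_def\<close>)
  also have "\<dots> = card Q * card (cosets_in B D)" using fibQ by simp
  finally show ?thesis using fP unfolding P_def Q_def by simp
qed

lemma idx_int:
  assumes E: "subgroup E G" and A: "subgroup A G" and C: "subgroup C G"
    and EA: "E \<subseteq> A" and f: "finite (cosets_in A (A \<inter> C))"
  shows "finite (cosets_in E (E \<inter> C)) \<and> card (cosets_in E (E \<inter> C)) \<le> card (cosets_in A (A \<inter> C))"
proof -
  have EC: "subgroup (E \<inter> C) G" using subgroups_Inter_pair[OF E C] .
  have AC: "subgroup (A \<inter> C) G" using subgroups_Inter_pair[OF A C] .
  have Ec: "E \<subseteq> carrier G" using subgroup.subset[OF E] .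
  have "(E \<inter> C) #> e = (E \<inter> C) #> e' \<longleftrightarrow> (A \<inter> C) #> e = (A \<inter> C) #> e'" if "e \<in> E" "e' \<in> E" for e e'
  proof -
    have c: "e \<in> carrier G" "e' \<in> carrier G" using that Ec by auto
    have "e \<otimes> inv e' \<in> E" using that subgroup.m_closed[OF E] subgroup.m_inv_closed[OF E] by blast
    moreover have "e \<otimes> inv e' \<in> A" using calculation EA by blast
    ultimately show ?thesis using rcos_eq[OF EC c] rcos_eq[OF AC c] by blast
  qed
  hence ci: "card (cosets_in E (E \<inter> C)) = card ((\<lambda>e. (A \<inter> C) #> e) ` E)"
     "finite (cosets_in E (E \<inter> C)) = finite ((\<lambda>e. (A \<inter> C) #> e) ` E)"
    using card_images[of E "\<lambda>e. (E \<inter> C) #> e" "\<lambda>e. (A \<inter> C) #> e"] unfolding cosets_in_def by auto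
  have sub: "(\<lambda>e. (A \<inter> C) #> e) ` E \<subseteq> cosets_in A (A \<inter> C)" unfolding cosets_in_def using EA by blast
  show ?thesis using ci sub f by (metis card_mono finite_subset)
qed

lemma cj_image:
  assumes "x \<in> carrier G" "A \<subseteq> carrier G"
  shows "cj x A = (\<lambda>a. x \<otimes> a \<otimes> inv x) ` A"
proof
  show "cj x A \<subseteq> (\<lambda>a. x \<otimes> a \<otimes> inv x) ` A"
  proof
    fix y assume "y \<in> cj x A"
    then have y: "y \<in> carrier G" "inv x \<otimes> y \<otimes> x \<in> A" by (auto simp: cj_def)
    have "y = x \<otimes> (inv x \<otimes> y \<otimes> x) \<otimes> inv x" using y assms by (simp add: m_assoc)
    thus "y \<in> (\<lambda>a. x \<otimes> a \<otimes> inv x) ` A" using y(2) by blast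
  qed
  show "(\<lambda>a. x \<otimes> a \<otimes> inv x) ` A \<subseteq> cj x A"
    using mem_cj assms by auto
qed

lemma idx_cj:
  assumes A: "subgroup A G" and B: "subgroup B G" and x: "x \<in> carrier G"
  shows "card (cosets_in (cj x A) (cj x B)) = card (cosets_in A B) \<and>
         (finite (cosets_in (cj x A) (cj x B)) \<longleftrightarrow> finite (cosets_in A B))"
proof -
  have Ac: "A \<subseteq> carrier G" using subgroup.subset[OF A] .
  have cB: "subgroup (cj x B) G" using cj_subgroup[OF B x] .
  have e1: "cosets_in (cj x A) (cj x B) = (\<lambda>a. cj x B #> (x \<otimes> a \<otimes> inv x)) ` A"
    unfolding cosets_in_def cj_image[OF x Ac] image_image ..
  have "cj x B #> (x \<otimes> a \<otimes> inv x) = cj x B #> (x \<otimes> b \<otimes> inv x) \<longleftrightarrow> B #> a = B #> b"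
    if "a \<in> A" "b \<in> A" for a b
  proof -
    have c: "a \<in> carrier G" "b \<in> carrier G" using that Ac by auto
    have c2: "x \<otimes> a \<otimes> inv x \<in> carrier G" "x \<otimes> b \<otimes> inv x \<in> carrier G" using c x by auto
    have "(x \<otimes> a \<otimes> inv x) \<otimes> inv (x \<otimes> b \<otimes> inv x) = x \<otimes> (a \<otimes> inv b) \<otimes> inv x"
      using c x by (simp add: inv_mult_group m_assoc)
    thus ?thesis using rcos_eq[OF cB c2] rcos_eq[OF B c] mem_cj[OF x, of "a \<otimes> inv b" B] c by simp
  qed
  thus ?thesis using card_images[of A "\<lambda>a. cj x B #> (x \<otimes> a \<otimes> inv x)" "\<lambda>a. B #> a"]
    unfolding e1 unfolding cosets_in_def by auto
qed

lemma cosets_in_pos: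
  assumes "subgroup A G" "finite (cosets_in A B)"
  shows "card (cosets_in A B) > 0"
  using assms subgroup.one_closed[OF assms(1)] unfolding cosets_in_def
  by (metis card_gt_0_iff empty_iff image_is_empty)

end



context group begin

definition LL :: "'a set \<Rightarrow> 'a \<Rightarrow> nat" where
  "LL H x = card (cosets_in H (H \<inter> cj x H))"

lemma R_conj:
  assumes H: "subgroup H G" and z: "z \<in> carrier G"
  shows "card (cosets_in (cj z H) (cj z H \<inter> H)) = LL H (inv z) \<and>
         (finite (cosets_in (cj z H) (cj z H \<inter> H)) \<longleftrightarrow> finite (cosets_in H (H \<inter> cj (inv z) H)))"
proof -
  have Hc: "H \<subseteq> carrier G" using subgroup.subset[OF H] .
  have e: "cj z (H \<inter> cj (inv z) H) = cj z H \<inter> H"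
    using cj_Int cj_cj[OF z inv_closed[OF z]] z cj_one[OF Hc] by simp
  have S: "subgroup (H \<inter> cj (inv z) H) G" using subgroups_Inter_pair[OF H cj_subgroup[OF H]] z by simp
  show ?thesis using idx_cj[OF H S z] unfolding e LL_def by simp
qed

lemma LL_mult:
  assumes H: "subgroup H G" and fin: "\<And>x. x \<in> carrier G \<Longrightarrow> finite (cosets_in H (H \<inter> cj x H))"
    and x: "x \<in> carrier G" and y: "y \<in> carrier G"
  shows "LL H (x \<otimes> y) * LL H (inv x) * LL H (inv y) = LL H x * LL H y * LL H (inv (x \<otimes> y))"
proof -
  have Hc: "H \<subseteq> carrier G" using subgroup.subset[OF H] .
  have xy: "x \<otimes> y \<in> carrier G" using x y by simp
  define A where "A = H"
  define B where "B = cj x H"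
  define C where "C = cj x (cj y H)"
  have C': "C = cj (x \<otimes> y) H" unfolding C_def using cj_cj[OF x y] .
  have sA: "subgroup A G" unfolding A_def by (rule H)
  have sB: "subgroup B G" unfolding B_def by (rule cj_subgroup[OF H x])
  have sC: "subgroup C G" unfolding C' by (rule cj_subgroup[OF H xy])
  define AB where "AB = A \<inter> B"
  define AC where "AC = A \<inter> C"
  define BC where "BC = B \<inter> C"
  define D where "D = AB \<inter> C"
  have sAB: "subgroup AB G" unfolding AB_def using subgroups_Inter_pair[OF sA sB] .
  have sAC: "subgroup AC G" unfolding AC_def using subgroups_Inter_pair[OF sA sC] .
  have sBC: "subgroup BC G" unfolding BC_def using subgroups_Inter_pair[OF sB sC] .
  have sD: "subgroup D G" unfolding D_def using subgroups_Inter_pair[OF sAB sC] .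
  have i1: "finite (cosets_in A AB) \<and> card (cosets_in A AB) = LL H x"
    unfolding A_def AB_def B_def LL_def using fin[OF x] by simp
  have i2: "finite (cosets_in B AB) \<and> card (cosets_in B AB) = LL H (inv x)"
    using R_conj[OF H x] fin[OF inv_closed[OF x]] unfolding A_def AB_def B_def
    by (simp add: Int_commute)
  have i3: "finite (cosets_in A AC) \<and> card (cosets_in A AC) = LL H (x \<otimes> y)"
    unfolding A_def AC_def C' LL_def using fin[OF xy] by simp
  have i4: "finite (cosets_in C AC) \<and> card (cosets_in C AC) = LL H (inv (x \<otimes> y))"
    using R_conj[OF H xy] fin[OF inv_closed[OF xy]] unfolding A_def AC_def C'
    by (simp add: Int_commute)
  have SBy: "subgroup (H \<inter> cj y H) G" using subgroups_Inter_pair[OF H cj_subgroup[OF H y]] .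
  have i5: "finite (cosets_in B BC) \<and> card (cosets_in B BC) = LL H y"
    using idx_cj[OF H SBy x] fin[OF y] unfolding B_def BC_def C_def LL_def cj_Int by simp
  have SBy2: "subgroup (cj y H \<inter> H) G" using subgroups_Inter_pair[OF cj_subgroup[OF H y] H] .
  have i6: "finite (cosets_in C BC) \<and> card (cosets_in C BC) = LL H (inv y)"
    using idx_cj[OF cj_subgroup[OF H y] SBy2 x] R_conj[OF H y] fin[OF inv_closed[OF y]]
    unfolding B_def BC_def C_def cj_Int by (simp add: Int_commute)
  have p: "finite (cosets_in AB D)"
    using idx_int[OF sAB sA sC _ ] i3 unfolding D_def AB_def AC_def by auto
  have DAC: "D = AC \<inter> B" unfolding D_def AB_def AC_def by blast
  have q: "finite (cosets_in AC D)"
    using idx_int[OF sAC sA sB _ ] i1 unfolding DAC AB_def AC_def by auto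
  have DBC: "D = BC \<inter> A" unfolding D_def AB_def BC_def by blast
  have BA: "B \<inter> A = AB" unfolding AB_def by blast
  have r: "finite (cosets_in BC D)"
    using idx_int[OF sBC sB sA _ ] i2 unfolding DBC BA BC_def by auto
  have DAB: "D \<subseteq> AB" "AB \<subseteq> A" "AB \<subseteq> B" unfolding D_def AB_def by auto
  have DAC': "D \<subseteq> AC" "AC \<subseteq> A" "AC \<subseteq> C" unfolding D_def AB_def AC_def by auto
  have DBC': "D \<subseteq> BC" "BC \<subseteq> B" "BC \<subseteq> C" unfolding D_def AB_def BC_def by auto
  have t1: "card (cosets_in A D) = card (cosets_in A AB) * card (cosets_in AB D)"
    using idx_trans[OF sD sAB sA DAB(1,2)] i1 p by auto
  have t2: "card (cosets_in A D) = card (cosets_in A AC) * card (cosets_in AC D)"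
    using idx_trans[OF sD sAC sA DAC'(1,2)] i3 q by auto
  have t3: "card (cosets_in B D) = card (cosets_in B AB) * card (cosets_in AB D)"
    using idx_trans[OF sD sAB sB DAB(1,3)] i2 p by auto
  have t4: "card (cosets_in B D) = card (cosets_in B BC) * card (cosets_in BC D)"
    using idx_trans[OF sD sBC sB DBC'(1,2)] i5 r by auto
  have t5: "card (cosets_in C D) = card (cosets_in C AC) * card (cosets_in AC D)"
    using idx_trans[OF sD sAC sC DAC'(1,3)] i4 q by auto
  have t6: "card (cosets_in C D) = card (cosets_in C BC) * card (cosets_in BC D)"
    using idx_trans[OF sD sBC sC DBC'(1,3)] i6 r by auto
  define P where "P = card (cosets_in AB D)"
  define Q where "Q = card (cosets_in AC D)"
  define R where "R = card (cosets_in BC D)"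
  have pos: "P * Q * R \<noteq> 0" unfolding P_def Q_def R_def
    using cosets_in_pos[OF sAB p] cosets_in_pos[OF sAC q] cosets_in_pos[OF sBC r] by simp
  have e1: "LL H x * P = LL H (x \<otimes> y) * Q" using t1 t2 i1 i3 unfolding P_def Q_def by simp
  have e2: "LL H (inv x) * P = LL H y * R" using t3 t4 i2 i5 unfolding P_def R_def by simp
  have e3: "LL H (inv y) * R = LL H (inv (x \<otimes> y)) * Q" using t5 t6 i4 i6 unfolding Q_def R_def by simp
  have "LL H (x \<otimes> y) * LL H (inv x) * LL H (inv y) * (P * Q * R)
      = (LL H (x \<otimes> y) * Q) * (LL H (inv x) * P) * (LL H (inv y) * R)" by (simp add: ac_simps)
  also have "\<dots> = (LL H x * P) * (LL H y * R) * (LL H (inv (x \<otimes> y)) * Q)" by (simp only: e1 e2 e3)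
  also have "\<dots> = LL H x * LL H y * LL H (inv (x \<otimes> y)) * (P * Q * R)" by (simp add: ac_simps)
  finally show ?thesis using pos by simp
qed

end



lemma growth:
  fixes q a C :: real and K :: nat
  assumes q: "q > 1" and a: "a \<ge> 0"
  shows "\<exists>n. C * (1 + real n * a) ^ K < q ^ n"
proof -
  define lq where "lq = ln q"
  have lq: "lq > 0" using q unfolding lq_def by simp
  have fl: "filterlim (\<lambda>n::nat. lq * real n) at_top sequentially"
    by (rule filterlim_tendsto_pos_mult_at_top[OF tendsto_const lq filterlim_real_sequentially])
  have lim: "((\<lambda>n::nat. (lq * real n) ^ K / exp (lq * real n)) \<longlongrightarrow> 0) sequentially"
    using filterlim_compose[OF tendsto_power_div_exp_0 fl] by simp
  have ex: "exp (lq * real n) = q ^ n" for n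
  proof -
    have "exp (lq * real n) = exp (real n * ln q)" unfolding lq_def by (simp add: mult.commute)
    also have "\<dots> = exp (ln q) ^ n" by (rule exp_of_nat_mult)
    also have "\<dots> = q ^ n" using q by simp
    finally show ?thesis .
  qed
  define M where "M = \<bar>C\<bar> * ((1 + a) / lq) ^ K + 1"
  have "\<bar>C\<bar> * ((1 + a) / lq) ^ K \<ge> 0" using a lq by simp
  hence M: "M > 0" unfolding M_def by linarith
  have "\<forall>\<^sub>F n in sequentially. (lq * real n) ^ K / exp (lq * real n) < 1 / M"
    using order_tendstoD(2)[OF lim] M by simp
  moreover have "\<forall>\<^sub>F n in sequentially. n \<ge> (1::nat)" by (rule eventually_ge_at_top)
  ultimately have "\<forall>\<^sub>F n in sequentially. (lq * real n) ^ K / q ^ n < 1 / M \<and> n \<ge> 1"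
    by eventually_elim (simp add: ex)
  then obtain N where N: "\<forall>n\<ge>N. (lq * real n) ^ K / q ^ n < 1 / M \<and> n \<ge> 1"
    unfolding eventually_sequentially by blast
  define n where "n = N"
  have n: "(lq * real n) ^ K / q ^ n < 1 / M" "n \<ge> 1" using N unfolding n_def by auto
  have qn: "q ^ n > 0" using q by simp
  have h: "(lq * real n) ^ K < 1 / M * q ^ n" using n(1) qn by (simp add: pos_divide_less_eq)
  have "M * (lq * real n) ^ K < M * (1 / M * q ^ n)" by (rule mult_strict_left_mono[OF h M])
  hence "M * (lq * real n) ^ K < q ^ n" using M by simp
  moreover have "C * (1 + real n * a) ^ K \<le> M * (lq * real n) ^ K"
  proof -
    have b1: "1 + real n * a \<le> (1 + a) / lq * (lq * real n)" using n(2) lq a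
      by (simp add: field_simps)
    have "C * (1 + real n * a) ^ K \<le> \<bar>C\<bar> * (1 + real n * a) ^ K"
      by (rule mult_right_mono) (use a in auto)
    also have "\<dots> \<le> \<bar>C\<bar> * ((1 + a) / lq * (lq * real n)) ^ K"
      by (rule mult_left_mono, rule power_mono) (use b1 a in auto)
    also have "\<dots> = (\<bar>C\<bar> * ((1 + a) / lq) ^ K) * (lq * real n) ^ K"
      by (simp only: power_mult_distrib mult.assoc)
    also have "\<dots> \<le> M * (lq * real n) ^ K"
      unfolding M_def by (rule mult_right_mono) (use lq in auto)
    finally show ?thesis .
  qed
  ultimately show ?thesis by (meson le_less_trans)
qed

context group begin

lemma LL_pos:
  assumes "subgroup H G" "\<And>x. x \<in> carrier G \<Longrightarrow> finite (cosets_in H (H \<inter> cj x H))" "x \<in> carrier G"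
  shows "LL H x > 0"
  unfolding LL_def by (rule cosets_in_pos) (use assms in auto)

lemma LL_pow:
  assumes H: "subgroup H G" and fin: "\<And>x. x \<in> carrier G \<Longrightarrow> finite (cosets_in H (H \<inter> cj x H))"
    and g: "g \<in> carrier G"
  shows "LL H (g [^] n) * LL H (inv g) ^ n = LL H g ^ n * LL H (inv (g [^] n))"
proof (induction n)
  case 0
  have "LL H \<one> = LL H (inv \<one>)" by simp
  thus ?case by simp
next
  case (Suc n)
  have gn: "g [^] n \<in> carrier G" using g by simp
  have m: "LL H (g \<otimes> g [^] n) * LL H (inv g) * LL H (inv (g [^] n)) =
           LL H g * LL H (g [^] n) * LL H (inv (g \<otimes> g [^] n))"
    using LL_mult[OF H fin g gn] .
  have e: "g [^] Suc n = g \<otimes> g [^] n" using nat_pow_Suc2[OF g] .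
  define a where "a = LL H (g [^] Suc n)"
  define b where "b = LL H (inv (g [^] Suc n))"
  define u where "u = LL H (g [^] n)"
  define v where "v = LL H (inv (g [^] n))"
  define L where "L = LL H g"
  define R where "R = LL H (inv g)"
  have m': "a * R * v = L * u * b" using m unfolding a_def b_def u_def v_def L_def R_def e .
  have IH: "u * R ^ n = L ^ n * v" using Suc.IH unfolding u_def v_def L_def R_def .
  have vpos: "v > 0" unfolding v_def using LL_pos[OF H fin] gn by simp
  have "(a * R ^ Suc n) * v = (a * R * v) * R ^ n" by (simp add: ac_simps)
  also have "\<dots> = L * b * (u * R ^ n)" using m' by (simp add: ac_simps)
  also have "\<dots> = (L ^ Suc n * b) * v" using IH by (simp add: ac_simps)
  finally have "a * R ^ Suc n = L ^ Suc n * b" using vpos by simp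
  thus ?case unfolding a_def b_def L_def R_def .
qed

lemma length_pow:
  assumes l: "length_function G H l" and g: "g \<in> carrier G"
  shows "l (g [^] n) \<le> real n * l g"
proof (induction n)
  case 0
  have "l \<one> = 0" using l unfolding length_function_def by blast
  thus ?case by simp
next
  case (Suc n)
  have tri: "\<forall>g \<in> carrier G. \<forall>h \<in> carrier G. l (g \<otimes> h) \<le> l g + l h"
    using l unfolding length_function_def by blast
  have gn: "g [^] n \<in> carrier G" using g by simp
  have "l (g [^] Suc n) = l (g [^] n \<otimes> g)" by simp
  also have "\<dots> \<le> l (g [^] n) + l g" using tri gn g by blast
  also have "\<dots> \<le> real (Suc n) * l g" using Suc.IH by (simp add: algebra_simps)
  finally show ?case .
qed

lemma hecke_L_LL:
  assumes "subgroup H G" "x \<in> carrier G"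
  shows "hecke_L G H x = LL H x" "hecke_L_cosets G H x = cosets_in H (H \<inter> cj x H)"
  using cj_eq[OF assms(2) subgroup.subset[OF assms(1)]]
  unfolding hecke_L_def hecke_L_cosets_def LL_def cosets_in_def by simp_all

end



context group begin

lemma card_S:
  assumes H: "subgroup H G" and z: "z \<in> carrier G"
  shows "card ((\<lambda>h. H #> (inv z \<otimes> h)) ` H) = LL H z \<and>
         (finite ((\<lambda>h. H #> (inv z \<otimes> h)) ` H) \<longleftrightarrow> finite (cosets_in H (H \<inter> cj z H)))"
proof -
  have Hc: "H \<subseteq> carrier G" using subgroup.subset[OF H] .
  have HC: "subgroup (H \<inter> cj z H) G" using subgroups_Inter_pair[OF H cj_subgroup[OF H z]] .
  have "H #> (inv z \<otimes> h) = H #> (inv z \<otimes> h') \<longleftrightarrow> (H \<inter> cj z H) #> h = (H \<inter> cj z H) #> h'"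
    if hh: "h \<in> H" "h' \<in> H" for h h'
  proof -
    have c: "h \<in> carrier G" "h' \<in> carrier G" using hh Hc by auto
    have c2: "inv z \<otimes> h \<in> carrier G" "inv z \<otimes> h' \<in> carrier G" using c z by auto
    have e: "(inv z \<otimes> h) \<otimes> inv (inv z \<otimes> h') = inv z \<otimes> (h \<otimes> inv h') \<otimes> z"
      using c z by (simp add: inv_mult_group m_assoc)
    have hH: "h \<otimes> inv h' \<in> H" using hh subgroup.m_closed[OF H] subgroup.m_inv_closed[OF H] by blast
    have hc: "h \<otimes> inv h' \<in> carrier G" using c by simp
    have "H #> (inv z \<otimes> h) = H #> (inv z \<otimes> h') \<longleftrightarrow> inv z \<otimes> (h \<otimes> inv h') \<otimes> z \<in> H"
      using rcos_eq[OF H c2] e by simp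
    also have "\<dots> \<longleftrightarrow> h \<otimes> inv h' \<in> H \<inter> cj z H" using hH hc unfolding cj_def by simp
    also have "\<dots> \<longleftrightarrow> (H \<inter> cj z H) #> h = (H \<inter> cj z H) #> h'" using rcos_eq[OF HC c] by simp
    finally show ?thesis .
  qed
  thus ?thesis using card_images[of H "\<lambda>h. H #> (inv z \<otimes> h)" "\<lambda>h. (H \<inter> cj z H) #> h"]
    unfolding LL_def cosets_in_def by auto
qed

lemma memT:
  assumes H: "subgroup H G" and z: "z \<in> carrier G" and b: "b \<in> carrier G"
  shows "H #> b \<in> (\<lambda>h. H #> (z \<otimes> h)) ` H \<longleftrightarrow> (\<exists>h\<in>H. b \<otimes> inv h \<otimes> inv z \<in> H)"
proof -
  have Hc: "H \<subseteq> carrier G" using subgroup.subset[OF H] .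
  have "H #> b = H #> (z \<otimes> h) \<longleftrightarrow> b \<otimes> inv h \<otimes> inv z \<in> H" if "h \<in> H" for h
  proof -
    have c: "h \<in> carrier G" using that Hc by auto
    have "b \<otimes> inv (z \<otimes> h) = b \<otimes> inv h \<otimes> inv z" using c z b by (simp add: inv_mult_group m_assoc)
    thus ?thesis using rcos_eq[OF H b m_closed[OF z c]] by simp
  qed
  thus ?thesis by blast
qed

lemma rep_in:
  assumes H: "subgroup H G" and a: "a \<in> carrier G"
  shows "coset_rep (H #> a) \<in> H #> a"
proof -
  have "a \<in> H #> a" using rcos_self[OF a H] .
  thus ?thesis unfolding coset_rep_def by (rule someI)
qed

lemma rcosets_form:
  assumes "C \<in> rcosets H"
  obtains a where "a \<in> carrier G" "C = H #> a"
  using assms unfolding RCOSETS_def by blast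

end



context group begin

lemma RD_step:
  assumes H: "subgroup H G"
    and fin: "\<And>x. x \<in> carrier G \<Longrightarrow> finite (cosets_in H (H \<inter> cj x H))"
    and lf: "length_function G H l" and c: "c > 0" and s: "s > 0"
    and RD: "\<forall>f \<in> hecke_algebra G H. \<forall>\<xi>. in_l2 G H \<xi> \<longrightarrow>
        in_l2 G H (hecke_conv G H f \<xi>) \<and>
        l2_norm G H (hecke_conv G H f \<xi>) \<le>
          c * sqrt (\<Sum>C \<in> {C. f C \<noteq> 0}.
                (cmod (f C))\<^sup>2 * (1 + l (coset_rep C)) powr (2 * s))
            * l2_norm G H \<xi>"
    and x: "x \<in> carrier G"
  shows "real (LL H x) \<le> c\<^sup>2 * real (LL H (inv x)) * (1 + l x) powr (2 * s)"
proof -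
  have Hc: "H \<subseteq> carrier G" using subgroup.subset[OF H] .
  have ix: "inv x \<in> carrier G" using x by simp
  define S where "S = (\<lambda>h. H #> (inv x \<otimes> h)) ` H"
  define T where "T = (\<lambda>h. H #> (x \<otimes> h)) ` H"
  have cS: "card S = LL H x" "finite S" using card_S[OF H x] fin[OF x] unfolding S_def by auto
  have T': "T = (\<lambda>h. H #> (inv (inv x) \<otimes> h)) ` H" unfolding T_def using x by simp
  have cT: "card T = LL H (inv x)" "finite T" using card_S[OF H ix] fin[OF ix] unfolding T' by auto
  have Ssub: "S \<subseteq> rcosets H" unfolding S_def using x Hc by (auto intro!: rcosetsI)
  have Tsub: "T \<subseteq> rcosets H" unfolding T_def using x Hc by (auto intro!: rcosetsI)
  define f :: "'a set \<Rightarrow> complex" where "f = (\<lambda>C. if C \<in> T then 1 else 0)"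
  define \<xi> :: "'a set \<Rightarrow> complex" where "\<xi> = (\<lambda>C. if C \<in> S then 1 else 0)"
  have supp: "{C. f C \<noteq> 0} = T" unfolding f_def by auto
  have inv_f: "f (C #> h) = f C" if C: "C \<in> rcosets H" and h: "h \<in> H" for C h
  proof -
    obtain a where a: "a \<in> carrier G" "C = H #> a" using rcosets_form[OF C] by blast
    have hc: "h \<in> carrier G" using h Hc by auto
    have e: "C #> h = H #> (a \<otimes> h)" using coset_mult_assoc[OF Hc a(1) hc] a(2) by simp
    have "(\<exists>h'\<in>H. a \<otimes> h \<otimes> inv h' \<otimes> inv x \<in> H) \<longleftrightarrow> (\<exists>h'\<in>H. a \<otimes> inv h' \<otimes> inv x \<in> H)"
    proof
      assume "\<exists>h'\<in>H. a \<otimes> h \<otimes> inv h' \<otimes> inv x \<in> H"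
      then obtain h' where h': "h' \<in> H" "a \<otimes> h \<otimes> inv h' \<otimes> inv x \<in> H" by blast
      have h'c: "h' \<in> carrier G" using h' Hc by auto
      have "a \<otimes> inv (h' \<otimes> inv h) \<otimes> inv x = a \<otimes> h \<otimes> inv h' \<otimes> inv x"
        using h'c hc a x by (simp add: inv_mult_group m_assoc)
      moreover have "h' \<otimes> inv h \<in> H" using h h' subgroup.m_closed[OF H] subgroup.m_inv_closed[OF H] by blast
      ultimately show "\<exists>h'\<in>H. a \<otimes> inv h' \<otimes> inv x \<in> H" using h'(2) by metis
    next
      assume "\<exists>h'\<in>H. a \<otimes> inv h' \<otimes> inv x \<in> H"
      then obtain h' where h': "h' \<in> H" "a \<otimes> inv h' \<otimes> inv x \<in> H" by blast
      have h'c: "h' \<in> carrier G" using h' Hc by auto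
      have "a \<otimes> h \<otimes> inv (h' \<otimes> h) \<otimes> inv x = a \<otimes> inv h' \<otimes> inv x"
        using h'c hc a x by (simp add: inv_mult_group m_assoc)
      moreover have "h' \<otimes> h \<in> H" using h h' subgroup.m_closed[OF H] by blast
      ultimately show "\<exists>h'\<in>H. a \<otimes> h \<otimes> inv h' \<otimes> inv x \<in> H" using h'(2) by metis
    qed
    moreover have "C #> h \<in> T \<longleftrightarrow> (\<exists>h'\<in>H. a \<otimes> h \<otimes> inv h' \<otimes> inv x \<in> H)"
      unfolding e T_def by (rule memT[OF H x m_closed[OF a(1) hc]])
    moreover have "C \<in> T \<longleftrightarrow> (\<exists>h'\<in>H. a \<otimes> inv h' \<otimes> inv x \<in> H)"
      unfolding a(2) T_def by (rule memT[OF H x a(1)])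
    ultimately have "C #> h \<in> T \<longleftrightarrow> C \<in> T" by blast
    thus ?thesis unfolding f_def by simp
  qed
  have fH: "f \<in> hecke_algebra G H"
    unfolding hecke_algebra_def using supp Tsub cT(2) inv_f by auto
  have sumS: "(\<lambda>C. (cmod (\<xi> C))\<^sup>2) summable_on (rcosets H)"
  proof -
    have "(\<lambda>C. (cmod (\<xi> C))\<^sup>2) summable_on S" using cS(2) by simp
    thus ?thesis by (subst (asm) summable_on_cong_neutral[where T="rcosets H" and g="\<lambda>C. (cmod (\<xi> C))\<^sup>2"])
                    (use Ssub in \<open>auto simp: \<xi>_def\<close>)
  qed
  have l2xi: "in_l2 G H \<xi>" unfolding in_l2_def using sumS .
  have nxi: "l2_norm G H \<xi> = sqrt (real (card S))"
  proof -
    have "(\<Sum>\<^sub>\<infinity>C \<in> rcosets H. (cmod (\<xi> C))\<^sup>2) = (\<Sum>\<^sub>\<infinity>C \<in> S. (cmod (\<xi> C))\<^sup>2)"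
      by (rule infsum_cong_neutral) (use Ssub in \<open>auto simp: \<xi>_def\<close>)
    also have "\<dots> = (\<Sum>C \<in> S. 1)" using cS(2) by (simp add: \<xi>_def)
    finally show ?thesis unfolding l2_norm_def by simp
  qed
  define r0 where "r0 = coset_rep H"
  have r0: "r0 \<in> H"
    using rep_in[OF H one_closed] coset_mult_one[OF Hc] unfolding r0_def by simp
  have r0c: "r0 \<in> carrier G" using r0 Hc by auto
  have convH: "hecke_conv G H f \<xi> H = of_nat (card S)"
  proof -
    have "hecke_conv G H f \<xi> H = (\<Sum>\<^sub>\<infinity>D \<in> rcosets H. f (H #> (r0 \<otimes> inv (coset_rep D))) * \<xi> D)"
      unfolding hecke_conv_def r0_def ..
    also have "\<dots> = (\<Sum>\<^sub>\<infinity>D \<in> S. f (H #> (r0 \<otimes> inv (coset_rep D))) * \<xi> D)"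
      by (rule infsum_cong_neutral) (use Ssub in \<open>auto simp: \<xi>_def\<close>)
    also have "\<dots> = (\<Sum>D \<in> S. 1)"
    proof -
      have "f (H #> (r0 \<otimes> inv (coset_rep D))) * \<xi> D = 1" if D: "D \<in> S" for D
      proof -
        obtain h where h: "h \<in> H" "D = H #> (inv x \<otimes> h)" using D unfolding S_def by blast
        have hc: "h \<in> carrier G" using h Hc by auto
        have "coset_rep D \<in> H #> (inv x \<otimes> h)" using rep_in[OF H m_closed[OF ix hc]] h(2) by simp
        then obtain h1 where h1: "h1 \<in> H" "coset_rep D = h1 \<otimes> (inv x \<otimes> h)"
          unfolding r_coset_def by blast
        have h1c: "h1 \<in> carrier G" using h1 Hc by auto
        define b where "b = r0 \<otimes> inv (coset_rep D)"
        have bc: "b \<in> carrier G" unfolding b_def h1(2) using r0c h1c hc x by simp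
        have "b \<otimes> inv (inv h1) \<otimes> inv x = r0 \<otimes> inv h"
          unfolding b_def h1(2) using r0c h1c hc x by (simp add: inv_mult_group m_assoc)
        moreover have "r0 \<otimes> inv h \<in> H" using r0 h subgroup.m_closed[OF H] subgroup.m_inv_closed[OF H] by blast
        moreover have "inv h1 \<in> H" using h1 subgroup.m_inv_closed[OF H] by blast
        ultimately have "H #> b \<in> T" unfolding T_def using memT[OF H x bc] by metis
        thus ?thesis using D unfolding f_def \<xi>_def b_def by simp
      qed
      thus ?thesis using cS(2) by (simp cong: sum.cong)
    qed
    finally show ?thesis by simp
  qed
  have RDx: "in_l2 G H (hecke_conv G H f \<xi>) \<and>
        l2_norm G H (hecke_conv G H f \<xi>) \<le>
          c * sqrt (\<Sum>C \<in> {C. f C \<noteq> 0}. (cmod (f C))\<^sup>2 * (1 + l (coset_rep C)) powr (2 * s))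
            * l2_norm G H \<xi>"
    using RD fH l2xi by blast
  have Hin: "H \<in> rcosets H" using rcosetsI[OF Hc one_closed] coset_mult_one[OF Hc] by simp
  have lower: "real (card S) \<le> l2_norm G H (hecke_conv G H f \<xi>)"
  proof -
    let ?g = "\<lambda>C. (cmod (hecke_conv G H f \<xi> C))\<^sup>2"
    have sg: "?g summable_on rcosets H" using RDx unfolding in_l2_def by blast
    have "(\<Sum>\<^sub>\<infinity>C \<in> {H}. ?g C) \<le> (\<Sum>\<^sub>\<infinity>C \<in> rcosets H. ?g C)"
      by (rule infsum_mono_neutral) (use sg Hin in auto)
    hence "(real (card S))\<^sup>2 \<le> (\<Sum>\<^sub>\<infinity>C \<in> rcosets H. ?g C)" using convH by simp
    hence "sqrt ((real (card S))\<^sup>2) \<le> l2_norm G H (hecke_conv G H f \<xi>)"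
      unfolding l2_norm_def by (rule real_sqrt_le_mono)
    thus ?thesis by simp
  qed
  define P where "P = (1 + l x) powr (2 * s)"
  have lx0: "l x \<ge> 0" using lf x unfolding length_function_def by blast
  have weight: "(\<Sum>C \<in> {C. f C \<noteq> 0}. (cmod (f C))\<^sup>2 * (1 + l (coset_rep C)) powr (2 * s))
                \<le> real (card T) * P"
  proof -
    have "(cmod (f C))\<^sup>2 * (1 + l (coset_rep C)) powr (2 * s) \<le> P" if C: "C \<in> T" for C
    proof -
      obtain h where h: "h \<in> H" "C = H #> (x \<otimes> h)" using C unfolding T_def by blast
      have hc: "h \<in> carrier G" using h Hc by auto
      have "coset_rep C \<in> H #> (x \<otimes> h)" using rep_in[OF H m_closed[OF x hc]] h(2) by simp
      then obtain h1 where h1: "h1 \<in> H" "coset_rep C = h1 \<otimes> (x \<otimes> h)"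
        unfolding r_coset_def by blast
      have h1c: "h1 \<in> carrier G" using h1 Hc by auto
      have tri: "\<forall>g \<in> carrier G. \<forall>h \<in> carrier G. l (g \<otimes> h) \<le> l g + l h"
        and z: "\<forall>h \<in> H. l h = 0" and nn: "\<forall>g \<in> carrier G. l g \<ge> 0"
        using lf unfolding length_function_def by blast+
      have "l (h1 \<otimes> (x \<otimes> h)) \<le> l h1 + l (x \<otimes> h)" using tri h1c x hc by simp
      also have "\<dots> \<le> l h1 + (l x + l h)" using tri x hc by simp
      also have "\<dots> = l x" using z h h1 by simp
      finally have lr: "l (coset_rep C) \<le> l x" using h1(2) by simp
      have lr0: "l (coset_rep C) \<ge> 0" using nn h1(2) h1c x hc by simp
      have "(1 + l (coset_rep C)) powr (2 * s) \<le> P" unfolding P_def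
        by (rule powr_mono2) (use s lr lr0 in auto)
      thus ?thesis using C unfolding f_def by simp
    qed
    hence "(\<Sum>C \<in> T. (cmod (f C))\<^sup>2 * (1 + l (coset_rep C)) powr (2 * s)) \<le> (\<Sum>C \<in> T. P)"
      by (rule sum_mono)
    thus ?thesis using supp by simp
  qed
  have Ppos: "P > 0" unfolding P_def using lx0 by simp
  have "real (card S) \<le> c * sqrt (real (card T) * P) * sqrt (real (card S))"
  proof -
    have "real (card S) \<le> l2_norm G H (hecke_conv G H f \<xi>)" by (rule lower)
    also have "\<dots> \<le> c * sqrt (\<Sum>C \<in> {C. f C \<noteq> 0}. (cmod (f C))\<^sup>2 * (1 + l (coset_rep C)) powr (2 * s))
            * l2_norm G H \<xi>" using RDx by blast
    also have "\<dots> \<le> c * sqrt (real (card T) * P) * sqrt (real (card S))"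
      unfolding nxi using c weight by (simp add: mult_right_mono real_sqrt_le_mono)
    finally show ?thesis .
  qed
  note ineq = this
  have Spos: "card S > 0" using cS LL_pos[OF H fin x] by simp
  have sq: "sqrt (real (card S)) * sqrt (real (card S)) = real (card S)" by simp
  have sp: "sqrt (real (card S)) > 0" using Spos by simp
  have "sqrt (real (card S)) * sqrt (real (card S)) \<le> (c * sqrt (real (card T) * P)) * sqrt (real (card S))"
    using ineq unfolding sq .
  hence "sqrt (real (card S)) \<le> c * sqrt (real (card T) * P)"
    using sp by (rule mult_right_le_imp_le)
  hence "(sqrt (real (card S)))\<^sup>2 \<le> (c * sqrt (real (card T) * P))\<^sup>2"
    by (rule power_mono) simp
  hence "real (card S) \<le> c\<^sup>2 * (real (card T) * P)"
    using Ppos by (simp add: power_mult_distrib)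
  thus ?thesis unfolding cS(1) cT(1) P_def by (simp add: mult.assoc)
qed

end



context group begin

lemma LL_le_inv:
  assumes H: "subgroup H G"
    and fin: "\<And>x. x \<in> carrier G \<Longrightarrow> finite (cosets_in H (H \<inter> cj x H))"
    and lf: "length_function G H l" and c: "c > 0" and s: "s > 0"
    and RD: "\<forall>f \<in> hecke_algebra G H. \<forall>\<xi>. in_l2 G H \<xi> \<longrightarrow>
        in_l2 G H (hecke_conv G H f \<xi>) \<and>
        l2_norm G H (hecke_conv G H f \<xi>) \<le>
          c * sqrt (\<Sum>C \<in> {C. f C \<noteq> 0}.
                (cmod (f C))\<^sup>2 * (1 + l (coset_rep C)) powr (2 * s))
            * l2_norm G H \<xi>"
    and g: "g \<in> carrier G"
  shows "LL H g \<le> LL H (inv g)"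
proof (rule ccontr)
  assume "\<not> LL H g \<le> LL H (inv g)"
  hence gt: "LL H g > LL H (inv g)" by simp
  define L where "L = real (LL H g)"
  define R where "R = real (LL H (inv g))"
  have Rpos: "R > 0" unfolding R_def using LL_pos[OF H fin] g by simp
  have LR: "L > R" unfolding L_def R_def using gt by simp
  define q where "q = L / R"
  have q: "q > 1" unfolding q_def using LR Rpos by simp
  define K where "K = nat \<lceil>2 * s\<rceil>"
  have K: "2 * s \<le> real K" unfolding K_def by linarith
  define a where "a = l g"
  have a: "a \<ge> 0" unfolding a_def using lf g unfolding length_function_def by blast
  have bound: "q ^ n \<le> c\<^sup>2 * (1 + real n * a) ^ K" for n
  proof -
    have gn: "g [^] n \<in> carrier G" using g by simp
    define U where "U = real (LL H (g [^] n))"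
    define V where "V = real (LL H (inv (g [^] n)))"
    have Vpos: "V > 0" unfolding V_def using LL_pos[OF H fin] gn by simp
    have st: "U \<le> c\<^sup>2 * V * (1 + l (g [^] n)) powr (2 * s)"
      unfolding U_def V_def by (rule RD_step[OF H fin lf c s RD gn])
    have ln0: "l (g [^] n) \<ge> 0" using lf gn unfolding length_function_def by blast
    have lnb: "l (g [^] n) \<le> real n * a" unfolding a_def by (rule length_pow[OF lf g])
    have b1: "(1 + l (g [^] n)) powr (2 * s) \<le> (1 + real n * a) powr (2 * s)"
      by (rule powr_mono2) (use s ln0 lnb in auto)
    have b2: "(1 + real n * a) powr (2 * s) \<le> (1 + real n * a) powr (real K)"
      by (rule powr_mono) (use K a in auto)
    have "real n * a \<ge> 0" using a by simp
    hence b3: "(1 + real n * a) powr (real K) = (1 + real n * a) ^ K"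
      by (intro powr_realpow) linarith
    have pw: "(1 + l (g [^] n)) powr (2 * s) \<le> (1 + real n * a) ^ K" using b1 b2 b3 by simp
    have eqn: "U * R ^ n = L ^ n * V"
      using arg_cong[OF LL_pow[OF H fin g, of n], of real] unfolding U_def V_def L_def R_def
      by simp
    have "L ^ n * V = U * R ^ n" using eqn by simp
    also have "\<dots> \<le> (c\<^sup>2 * V * (1 + real n * a) ^ K) * R ^ n"
    proof (rule mult_right_mono)
      have "c\<^sup>2 * V * (1 + l (g [^] n)) powr (2 * s) \<le> c\<^sup>2 * V * (1 + real n * a) ^ K"
        by (rule mult_left_mono[OF pw]) (use Vpos in simp)
      thus "U \<le> c\<^sup>2 * V * (1 + real n * a) ^ K" using st by linarith
    qed (use Rpos in simp)
    also have "\<dots> = (c\<^sup>2 * (1 + real n * a) ^ K * R ^ n) * V" by (simp add: ac_simps)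
    finally have "L ^ n \<le> c\<^sup>2 * (1 + real n * a) ^ K * R ^ n"
      using Vpos by (simp add: mult_le_cancel_right)
    hence "L ^ n / R ^ n \<le> c\<^sup>2 * (1 + real n * a) ^ K"
      using Rpos by (simp add: divide_le_eq)
    thus ?thesis unfolding q_def by (simp add: power_divide)
  qed
  obtain n where "c\<^sup>2 * (1 + real n * a) ^ K < q ^ n" using growth[OF q a] by blast
  with bound[of n] show False by simp
qed

end

theorem corollary3p13:
  fixes G :: "('a, 'b) monoid_scheme" and H :: "'a set"
  assumes "hecke_pair G H" and "has_RD G H"
  shows "rel_unimodular G H \<and> (\<forall>g \<in> carrier G. hecke_L G H g = hecke_R G H g)"
proof -
  have grp: "group G" and H: "subgroup H G" and fin0: "\<forall>x \<in> carrier G. finite (hecke_L_cosets G H x)"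
    using assms(1) unfolding hecke_pair_def by auto
  interpret group G by (rule grp)
  have fin: "finite (cosets_in H (H \<inter> cj x H))" if "x \<in> carrier G" for x
  proof -
    from fin0 that have "finite (hecke_L_cosets G H x)" by blast
    then show ?thesis unfolding hecke_L_LL(2)[OF H that] .
  qed
  obtain l s c where lf: "length_function G H l" and s: "s > 0" and c: "c > 0"
    and RD: "\<forall>f \<in> hecke_algebra G H. \<forall>\<xi>. in_l2 G H \<xi> \<longrightarrow>
        in_l2 G H (hecke_conv G H f \<xi>) \<and>
        l2_norm G H (hecke_conv G H f \<xi>) \<le>
          c * sqrt (\<Sum>C \<in> {C. f C \<noteq> 0}.
                (cmod (f C))\<^sup>2 * (1 + l (coset_rep C)) powr (2 * s))
            * l2_norm G H \<xi>"
    using assms(2) unfolding has_RD_def by blast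
  have eq: "hecke_L G H g = hecke_R G H g \<and> hecke_R G H g > 0" if g: "g \<in> carrier G" for g
  proof -
    have ig: "inv\<^bsub>G\<^esub> g \<in> carrier G" using g by simp
    have "LL H g \<le> LL H (inv\<^bsub>G\<^esub> g)" by (rule LL_le_inv[OF H fin lf c s RD g])
    moreover have "LL H (inv\<^bsub>G\<^esub> g) \<le> LL H (inv\<^bsub>G\<^esub> (inv\<^bsub>G\<^esub> g))" by (rule LL_le_inv[OF H fin lf c s RD ig])
    ultimately have "LL H g = LL H (inv\<^bsub>G\<^esub> g)" using g by simp
    moreover have "LL H (inv\<^bsub>G\<^esub> g) > 0" using LL_pos[OF H fin ig] .
    ultimately show ?thesis
      unfolding hecke_R_def using hecke_L_LL(1)[OF H g] hecke_L_LL(1)[OF H ig] by simp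
  qed
  have "rel_unimodular G H" unfolding rel_unimodular_def rel_modular_def
    using eq by simp
  thus ?thesis using eq by blast
qed



end
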